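(* Consider a sequential adaptive allocation of subjects to $K$ treatments in which the $m$-th subject is assigned according to $\bm X_m=(X_{m,1},\ldots,X_{m,K})$ (one component equal to $1$, the others $0$), and the potential responses $\{\xi_{m,k}\}_{m\ge1}$ on treatment $k$ are i.i.d. with $\mathbb E|\xi_{m,k}|^{2+\delta}<\infty$ for some $\delta>0$, $k=1,\ldots,K$. Let $t_m$ be the (increasing) entry time of subject $m$, with $\{t_{m+1}-t_m\}$ independent, and let $r_m(k)$ be the response time of subject $m$ on treatment $k$, with $\{r_m(k);m\ge1\}$ a sequence of independent random variables for each $k$; assume that $\{t_{m+1}-t_m,\,r_m(k);k=1,\ldots,K,\,m\ge n\}$ is independent of $\bm X_1,\ldots,\bm X_n$ for every $n$. Suppose there are constants $C>0$ and $\gamma\ge2$ such that $$\mu_k(m,l):=\Pr\{r_m(k)\ge t_{m+l}-t_m\}\le C\,l^{-\gamma},\qquad m,l=1,2,\ldots,\ k=1,\ldots,K.$$ Let $S_{n,k}=\sum_{m=1}^nX_{m,k}\xi_{m,k}$ and $N_{n,k}=\sum_{m=1}^nX_{m,k}$, and let $S^{obs}_{n,k}$ and $N^{obs}_{n,k}$ be, respectively, the sum and the number of the outcomes $X_{m,k}\xi_{m,k}$ ($m\le n$) on treatment $k$ that are observed prior to the $(n+1)$-th assignment, i.e. those with $t_m+r_m(k)<t_{n+1}$. Then there exists $\delta_0$ with $0<\delta_0<\frac12-\frac1{2+\delta}$ such that $$S_{n,k}-S^{obs}_{n,k}=o(n^{1/2-\delta_0})\ \ a.s.\qquad\text{and}\qquad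 N_{n,k}-N^{obs}_{n,k}=o(n^{1/2-\delta_0})\ \ a.s.,\quad k=1,\ldots,K.$$
   Context: The outcome of subject $m$ on treatment $k$ becomes available at time $t_m+r_m(k)$; the outcome is observed only for the treatment actually assigned. The assignments $\bm X_m$ may depend on previous assignments and observed outcomes (any adaptive design). *)

theory Defs
  imports "HOL-Probability.Probability" "HOL-Library.Landau_Symbols"
begin

text \<open>Subjects are indexed by m = 1, 2, ...; treatments by k = 1..K.
  X m k: assignment indicator, xi m k: potential response, t m: entry time,
  r m k: response time of subject m on treatment k.\<close>

definition S_tot :: "(nat \<Rightarrow> nat \<Rightarrow> 'a \<Rightarrow> real) \<Rightarrow> (nat \<Rightarrow> nat \<Rightarrow> 'a \<Rightarrow> real)
    \<Rightarrow> nat \<Rightarrow> nat \<Rightarrow> 'a \<Rightarrow> real" where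
  "S_tot X xi n k \<omega> = (\<Sum>m=1..n. X m k \<omega> * xi m k \<omega>)"

definition N_tot :: "(nat \<Rightarrow> nat \<Rightarrow> 'a \<Rightarrow> real) \<Rightarrow> nat \<Rightarrow> nat \<Rightarrow> 'a \<Rightarrow> real" where
  "N_tot X n k \<omega> = (\<Sum>m=1..n. X m k \<omega>)"

definition S_obs :: "(nat \<Rightarrow> nat \<Rightarrow> 'a \<Rightarrow> real) \<Rightarrow> (nat \<Rightarrow> nat \<Rightarrow> 'a \<Rightarrow> real)
    \<Rightarrow> (nat \<Rightarrow> 'a \<Rightarrow> real) \<Rightarrow> (nat \<Rightarrow> nat \<Rightarrow> 'a \<Rightarrow> real) \<Rightarrow> nat \<Rightarrow> nat \<Rightarrow> 'a \<Rightarrow> real" where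
  "S_obs X xi t r n k \<omega> =
     (\<Sum>m=1..n. if t m \<omega> + r m k \<omega> < t (Suc n) \<omega> then X m k \<omega> * xi m k \<omega> else 0)"

definition N_obs :: "(nat \<Rightarrow> nat \<Rightarrow> 'a \<Rightarrow> real)
    \<Rightarrow> (nat \<Rightarrow> 'a \<Rightarrow> real) \<Rightarrow> (nat \<Rightarrow> nat \<Rightarrow> 'a \<Rightarrow> real) \<Rightarrow> nat \<Rightarrow> nat \<Rightarrow> 'a \<Rightarrow> real" where
  "N_obs X t r n k \<omega> =
     (\<Sum>m=1..n. if t m \<omega> + r m k \<omega> < t (Suc n) \<omega> then X m k \<omega> else 0)"

end

theory Submission
  imports Defs
begin

lemma t_mono_gen:
  fixes t :: "nat \<Rightarrow> real"
  assumes "\<And>m. m \<ge> 1 \<Longrightarrow> t m \<le> t (Suc m)" "1 \<le> a" "a \<le> b"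
  shows "t a \<le> t b"
  using assms(3)
proof (induction b)
  case 0 then show ?case using assms(2) by simp
next
  case (Suc b)
  show ?case
  proof (cases "a = Suc b")
    case True then show ?thesis by simp
  next
    case False
    then have "a \<le> b" using Suc.prems by simp
    then have "t a \<le> t b" using Suc.IH by simp
    also have "t b \<le> t (Suc b)" using assms(1) \<open>a \<le> b\<close> assms(2) by simp
    finally show ?thesis .
  qed
qed

lemma basel_bound: "(\<Sum>l=1..N. 1 / (real l)^2) \<le> 2 - 1 / real (max N 1)"
proof (induction N)
  case 0 then show ?case by simp
next
  case (Suc N)
  show ?case
  proof (cases "N = 0")
    case True then show ?thesis by simp
  next
    case False
    then have N1: "real N \<ge> 1" by simp
    have "(\<Sum>l=1..Suc N. 1 / (real l)^2) = (\<Sum>l=1..N. 1 / (real l)^2) + 1 / (real N + 1)^2"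
      by simp
    also have "\<dots> \<le> 2 - 1 / real N + 1 / (real N + 1)^2"
      using Suc.IH False by simp
    also have "\<dots> \<le> 2 - 1 / (real N + 1)"
    proof -
      have "1 / (real N + 1)^2 \<le> 1 / real N - 1 / (real N + 1)"
      proof -
        have "1 / (real N + 1)^2 \<le> 1 / (real N * (real N + 1))"
          using N1 by (intro divide_left_mono) (auto simp: power2_eq_square)
        also have "\<dots> = 1 / real N - 1 / (real N + 1)"
          using N1 by (simp add: field_simps)
        finally show ?thesis .
      qed
      then show ?thesis by simp
    qed
    finally show ?thesis by (simp add: add.commute)
  qed
qed

lemma basel_le2: "(\<Sum>l=1..N. 1 / (real l)^2) \<le> 2"
  using basel_bound[of N] by (smt (verit) divide_nonneg_nonneg of_nat_0_le_iff)

lemma exp_neg_le_fact: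
  fixes y :: real assumes "y > 0" "k > 0"
  shows "exp (- y) \<le> (real k / y) ^ k"
proof -
  have "y / real k \<le> exp (y / real k)"
    using exp_ge_add_one_self[of "y / real k"] by linarith
  then have "(y / real k) ^ k \<le> exp (y / real k) ^ k"
    using assms by (intro power_mono) auto
  also have "\<dots> = exp y" using assms by (simp flip: exp_of_nat_mult)
  finally have "(y / real k) ^ k \<le> exp y" .
  then have "1 / exp y \<le> 1 / (y / real k) ^ k"
    using assms by (intro divide_left_mono) auto
  then show ?thesis by (simp add: exp_minus power_divide field_simps)
qed

lemma summable_geom_powr:
  fixes a c :: real assumes "a > 0"
  shows "summable (\<lambda>j::nat. c * (2 ^ j) powr (- a))"
proof -
  have eq: "(2 ^ j :: real) powr (- a) = (2 powr (- a)) ^ j" for j :: nat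
    by (simp add: powr_realpow[symmetric] powr_powr mult.commute)
  have "2 powr (- a) < (1::real)" using assms by (simp add: powr_less_one)
  moreover have "(0::real) \<le> 2 powr (-a)" by simp
  ultimately have "summable (\<lambda>j. (2 powr (- a :: real)) ^ j)" by (intro summable_geometric) simp
  then show ?thesis unfolding eq by (rule summable_mult)
qed

context prob_space
begin

lemma markov_sum_ind:
  assumes F: "finite F" and E: "\<And>m. m \<in> F \<Longrightarrow> E m \<in> sets M" and c: "c > 0"
  shows "prob {\<omega>\<in>space M. c \<le> (\<Sum>m\<in>F. indicator (E m) \<omega>)} \<le> (\<Sum>m\<in>F. prob (E m)) / c"
proof -
  have int: "integrable M (\<lambda>\<omega>. \<Sum>m\<in>F. indicator (E m) \<omega> :: real)"
    using E by (intro Bochner_Integration.integrable_sum integrable_real_indicator) (auto simp: emeasure_eq_measure)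
  have "prob {\<omega>\<in>space M. c \<le> (\<Sum>m\<in>F. indicator (E m) \<omega>)} \<le> (\<integral>\<omega>. (\<Sum>m\<in>F. indicator (E m) \<omega>) \<partial>M) / c"
    by (rule integral_Markov_inequality_measure[OF int _ _ c, where A="space M"])
       (auto intro!: sum_nonneg)
  also have "(\<integral>\<omega>. (\<Sum>m\<in>F. indicator (E m) \<omega> :: real) \<partial>M) = (\<Sum>m\<in>F. prob (E m))"
    using E by (subst Bochner_Integration.integral_sum) (auto intro!: integrable_real_indicator simp: Int_absorb2 sets.sets_into_space emeasure_eq_measure)
  finally show ?thesis .
qed

lemma prob_inter_indep:
  assumes indep: "indep_vars (\<lambda>_. borel) Z I" and S: "S \<subseteq> I" "S \<noteq> {}" "finite S"
    and B: "B \<in> sets borel"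
  shows "prob (\<Inter>m\<in>S. Z m -` B \<inter> space M) = (\<Prod>m\<in>S. prob (Z m -` B \<inter> space M))"
proof -
  have "indep_sets (\<lambda>i. { Z i -` A \<inter> space M | A. A \<in> sets borel}) I"
    using indep unfolding indep_vars_def2 by simp
  then show ?thesis
    by (rule indep_setsD) (use S B in auto)
qed

lemma exceed_bound:
  assumes indep: "indep_vars (\<lambda>_. borel) Z I" and W: "W \<subseteq> I" "finite W" and J: "J \<ge> 1"
    and B: "B \<in> sets borel" and p: "\<And>m. m \<in> W \<Longrightarrow> prob (Z m -` B \<inter> space M) \<le> p" "p \<ge> 0"
  shows "prob (\<Union>S\<in>{S. S \<subseteq> W \<and> card S = J}. \<Inter>m\<in>S. Z m -` B \<inter> space M) \<le> (real (card W) * p) ^ J"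
proof -
  have rv: "\<And>m. m \<in> I \<Longrightarrow> Z m \<in> borel_measurable M"
    using indep unfolding indep_vars_def2 by auto
  let ?F = "{S. S \<subseteq> W \<and> card S = J}"
  have "?F \<subseteq> Pow W" by auto
  then have finF: "finite ?F" using W(2) by (meson finite_Pow_iff finite_subset)
  have Sne: "S \<noteq> {}" if "S \<in> ?F" for S using that J by auto
  have meas: "(\<lambda>S. \<Inter>m\<in>S. Z m -` B \<inter> space M) ` ?F \<subseteq> sets M"
  proof
    fix A assume "A \<in> (\<lambda>S. \<Inter>m\<in>S. Z m -` B \<inter> space M) ` ?F"
    then obtain S where S: "S \<in> ?F" and A: "A = (\<Inter>m\<in>S. Z m -` B \<inter> space M)" by blast
    have "finite S" using S W finite_subset by blast
    then show "A \<in> sets M" unfolding A using Sne[OF S] S W rv B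
      by (intro sets.finite_INT) (auto intro!: measurable_sets)
  qed
  have "prob (\<Union>S\<in>?F. \<Inter>m\<in>S. Z m -` B \<inter> space M) \<le> (\<Sum>S\<in>?F. prob (\<Inter>m\<in>S. Z m -` B \<inter> space M))"
    by (rule finite_measure_subadditive_finite[OF finF meas])
  also have "\<dots> \<le> (\<Sum>S\<in>?F. p ^ J)"
  proof (rule sum_mono)
    fix S assume S: "S \<in> ?F"
    have fS: "finite S" using S W finite_subset by blast
    have "prob (\<Inter>m\<in>S. Z m -` B \<inter> space M) = (\<Prod>m\<in>S. prob (Z m -` B \<inter> space M))"
      using S W by (intro prob_inter_indep[OF indep _ Sne[OF S] fS B]) auto
    also have "\<dots> \<le> (\<Prod>m\<in>S. p)"
      using S p by (intro prod_mono) auto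
    also have "\<dots> = p ^ J" using S by simp
    finally show "prob (\<Inter>m\<in>S. Z m -` B \<inter> space M) \<le> p ^ J" .
  qed
  also have "\<dots> = real (card W choose J) * p ^ J"
    using n_subsets[OF W(2), of J] by simp
  also have "\<dots> \<le> real (card W ^ J) * p ^ J"
  proof (intro mult_right_mono)
    show "real (card W choose J) \<le> real (card W ^ J)"
    proof (cases "J \<le> card W")
      case True then show ?thesis using binomial_le_pow by simp
    next
      case False then show ?thesis by (simp add: binomial_eq_0)
    qed
  qed (use p in auto)
  also have "\<dots> = (real (card W) * p) ^ J" by (simp add: power_mult_distrib)
  finally show ?thesis .
qed

lemma hoeff_window:
  assumes indep: "indep_vars (\<lambda>_. borel) Z I" and W: "W \<subseteq> I" "finite W" "W \<noteq> {}"
    and distr: "\<And>m. m \<in> W \<Longrightarrow> distr M borel (Z m) = distr M borel Z0"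
    and Z0: "Z0 \<in> borel_measurable M" and lam: "lam > 0" and x: "x \<ge> 0"
  shows "prob {\<omega>\<in>space M. real (card W) * expectation (\<lambda>\<omega>. min \<bar>Z0 \<omega>\<bar> lam) + x
            \<le> (\<Sum>m\<in>W. min \<bar>Z m \<omega>\<bar> lam)} \<le> exp (-2 * x\<^sup>2 / (real (card W) * lam\<^sup>2))"
proof -
  let ?f = "\<lambda>y::real. min \<bar>y\<bar> lam"
  have fm: "?f \<in> borel_measurable borel" by measurable
  have rv: "\<And>m. m \<in> I \<Longrightarrow> Z m \<in> borel_measurable M"
    using indep unfolding indep_vars_def2 by auto
  have ind2: "indep_vars (\<lambda>_. borel) (\<lambda>m \<omega>. ?f (Z m \<omega>)) W"
    by (rule indep_vars_compose2[OF indep_vars_subset[OF indep W(1)]]) (use fm in auto)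
  have d2: "distr M borel (\<lambda>\<omega>. ?f (Z m \<omega>)) = distr M borel (\<lambda>\<omega>. ?f (Z0 \<omega>))" if m: "m \<in> W" for m
  proof -
    have "distr M borel (\<lambda>\<omega>. ?f (Z m \<omega>)) = distr (distr M borel (Z m)) borel ?f"
      using m W rv fm by (subst distr_distr) (auto simp: comp_def)
    also have "\<dots> = distr (distr M borel Z0) borel ?f" using distr[OF m] by simp
    also have "\<dots> = distr M borel (\<lambda>\<omega>. ?f (Z0 \<omega>))"
      using Z0 fm by (subst distr_distr) (auto simp: comp_def)
    finally show ?thesis .
  qed
  interpret I: iid_interval_bounded_random_variables M W "\<lambda>m \<omega>. ?f (Z m \<omega>)" "\<lambda>\<omega>. ?f (Z0 \<omega>)" 0 lam
  proof
    show "finite W" by fact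
    show "indep_vars (\<lambda>_. borel) (\<lambda>m \<omega>. ?f (Z m \<omega>)) W" by fact
    show "\<And>i. i \<in> W \<Longrightarrow> distr M borel (\<lambda>\<omega>. ?f (Z i \<omega>)) = distr M borel (\<lambda>\<omega>. ?f (Z0 \<omega>))" by (rule d2)
    show "random_variable borel (\<lambda>\<omega>. ?f (Z0 \<omega>))" using Z0 by measurable
    show "AE \<omega> in M. ?f (Z0 \<omega>) \<in> {0..lam}" using lam by auto
  qed
  interpret H: Hoeffding_ineq_iid M W "\<lambda>m \<omega>. ?f (Z m \<omega>)" "\<lambda>\<omega>. ?f (Z0 \<omega>)" 0 lam
     "expectation (\<lambda>\<omega>. ?f (Z0 \<omega>))"
    by unfold_locales simp
  have "prob {\<omega>\<in>space M. (\<Sum>m\<in>W. ?f (Z m \<omega>)) \<ge> real (card W) * expectation (\<lambda>\<omega>. ?f (Z0 \<omega>)) + x}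
     \<le> exp (-2 * x\<^sup>2 / (real (card W) * (lam - 0)\<^sup>2))"
    by (rule H.Hoeffding_ineq_ge[OF x lam W(3)])
  then show ?thesis by simp
qed

end

lemma smallo_from_bound:
  fixes f :: "nat \<Rightarrow> real"
  assumes "eventually (\<lambda>n. \<bar>f n\<bar> \<le> K * real n powr b) sequentially" "b < c"
  shows "f \<in> o(\<lambda>n. real n powr c)"
proof -
  have "f \<in> O(\<lambda>n. real n powr b)"
    using assms(1) by (intro bigoI[where c=K]) (auto elim!: eventually_mono)
  moreover have "(\<lambda>n. real n powr b) \<in> o(\<lambda>n. real n powr c)"
    using powr_smallo_iff[of real sequentially b c] filterlim_real_sequentially assms(2) by simp
  ultimately show ?thesis by (rule landau_o.big_small_trans)
qed

lemma sum_Un_le_nonneg: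
  fixes a :: "nat \<Rightarrow> real"
  assumes "finite A" "finite B" "\<And>m. a m \<ge> 0"
  shows "sum a (A \<union> B) \<le> sum a A + sum a B"
proof -
  have "sum a (A \<union> B) + sum a (A \<inter> B) = sum a A + sum a B"
    using assms by (intro sum.union_inter)
  moreover have "sum a (A \<inter> B) \<ge> 0" using assms by (intro sum_nonneg) auto
  ultimately show ?thesis by linarith
qed

locale delay_setup = prob_space M for M :: "'a measure" +
  fixes k :: nat and X :: "nat \<Rightarrow> nat \<Rightarrow> 'a \<Rightarrow> real" and xi :: "nat \<Rightarrow> nat \<Rightarrow> 'a \<Rightarrow> real"
    and t :: "nat \<Rightarrow> 'a \<Rightarrow> real" and r :: "nat \<Rightarrow> nat \<Rightarrow> 'a \<Rightarrow> real"
    and \<delta> C \<gamma> :: real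
  assumes X_01: "\<And>m \<omega>. m \<ge> 1 \<Longrightarrow> \<omega> \<in> space M \<Longrightarrow> X m k \<omega> \<in> {0, 1}"
    and xi_rv[measurable]: "\<And>m. xi m k \<in> borel_measurable M"
    and xi_indep: "indep_vars (\<lambda>_. borel) (\<lambda>m. xi m k) {1..}"
    and xi_ident: "\<And>m. m \<ge> 1 \<Longrightarrow> distr M borel (xi m k) = distr M borel (xi 1 k)"
    and \<delta>_pos: "\<delta> > 0"
    and xi_moment: "integrable M (\<lambda>\<omega>. \<bar>xi 1 k \<omega>\<bar> powr (2 + \<delta>))"
    and t_rv[measurable]: "\<And>m. t m \<in> borel_measurable M"
    and t_incr: "\<And>m \<omega>. m \<ge> 1 \<Longrightarrow> \<omega> \<in> space M \<Longrightarrow> t m \<omega> \<le> t (Suc m) \<omega>"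
    and r_rv[measurable]: "\<And>m. r m k \<in> borel_measurable M"
    and C_pos: "C > 0" and \<gamma>: "\<gamma> \<ge> 2"
    and mu_bound: "\<And>m l. m \<ge> 1 \<Longrightarrow> l \<ge> 1 \<Longrightarrow>
          measure M {\<omega> \<in> space M. r m k \<omega> \<ge> t (m + l) \<omega> - t m \<omega>} \<le> C * real l powr (- \<gamma>)"
begin

definition "qq = 2 + \<delta>"
definition "eta = (1/2 - 1/qq) / 8"
definition Nr :: "nat \<Rightarrow> real" where "Nr j = 2 ^ j"
definition wd :: "nat \<Rightarrow> nat" where "wd j = nat \<lceil>Nr j powr (1/2 - eta)\<rceil>"
definition lam :: "nat \<Rightarrow> real" where "lam j = Nr j powr (1/4)"
definition xx :: "nat \<Rightarrow> real" where "xx j = Nr j powr (1/2 - eta/4)"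
definition bX :: "nat \<Rightarrow> real" where "bX j = Nr j powr (1/qq + eta)"
definition "Jc = nat \<lceil>2 / eta\<rceil>"
definition "Mq = (\<integral>\<omega>. \<bar>xi 1 k \<omega>\<bar> powr qq \<partial>M)"
definition mu :: "nat \<Rightarrow> real" where "mu j = expectation (\<lambda>\<omega>. min \<bar>xi 1 k \<omega>\<bar> (lam j))"
definition Wn :: "nat \<Rightarrow> nat \<Rightarrow> nat set" where "Wn j n = {m\<in>{1..n}. n < m + wd j}"

definition "BAm j m = {\<omega>\<in>space M. t (2^j + 1) \<omega> - t m \<omega> \<le> r m k \<omega>}"
definition "BadA j = {\<omega>\<in>space M. Nr j powr (3 * eta) \<le> (\<Sum>m\<in>{1..2^j}. indicator (BAm j m) \<omega>)}"
definition "BBm j m = {\<omega>\<in>space M. t (m + wd j) \<omega> - t m \<omega> \<le> r m k \<omega>}"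
definition "BadB j = {\<omega>\<in>space M. Nr j powr (3 * eta) \<le> (\<Sum>m\<in>{2^j<..<2*2^j}. indicator (BBm j m) \<omega>)}"
definition "BadX j = (\<Union>m\<in>{1..2*2^j}. {\<omega>\<in>space M. bX j < \<bar>xi m k \<omega>\<bar>})"
definition "BadH j = (\<Union>n\<in>{2^j..<2*2^j}. {\<omega>\<in>space M.
    real (card (Wn j n)) * mu j + xx j \<le> (\<Sum>m\<in>Wn j n. min \<bar>xi m k \<omega>\<bar> (lam j))})"
definition "BadE j = (\<Union>n\<in>{2^j..<2*2^j}. \<Union>S\<in>{S. S \<subseteq> Wn j n \<and> card S = Jc}.
    \<Inter>m\<in>S. xi m k -` {y. lam j < \<bar>y\<bar>} \<inter> space M)"

lemma qq_gt2: "qq > 2" using \<delta>_pos by (simp add: qq_def)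
lemma eta_pos: "eta > 0"
proof -
  have "1 / qq < 1/2" using qq_gt2 by (simp add: field_simps)
  then show ?thesis by (simp add: eta_def)
qed
lemma eta_rel: "1/qq + 8 * eta = 1/2" by (simp add: eta_def field_simps)
lemma eta_small: "eta < 1/16"
proof -
  have "1/qq > 0" using qq_gt2 by simp
  then show ?thesis using eta_rel by linarith
qed
lemma Nr_ge1: "Nr j \<ge> 1" by (simp add: Nr_def)
lemma Nr_pos: "Nr j > 0" by (simp add: Nr_def)
lemma Nr_nat: "Nr j = real ((2::nat) ^ j)" by (simp add: Nr_def)

lemma wd_ge: "real (wd j) \<ge> Nr j powr (1/2 - eta)"
proof -
  have "Nr j powr (1/2 - eta) \<le> of_int \<lceil>Nr j powr (1/2 - eta)\<rceil>" by (rule le_of_int_ceiling)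
  moreover have "\<lceil>Nr j powr (1/2 - eta)\<rceil> \<ge> 0"
  proof -
    have h: "0 \<le> Nr j powr (1/2 - eta)" by simp
    show ?thesis using h by (metis ceiling_mono ceiling_zero)
  qed
  ultimately show ?thesis unfolding wd_def by simp
qed

end

context delay_setup
begin

lemma powr_le_inv_sq:
  assumes "l \<ge> (1::real)" shows "l powr (- \<gamma>) \<le> 1 / l^2"
proof -
  have "l powr (- \<gamma>) \<le> l powr (- 2)" using assms \<gamma> by (intro powr_mono) auto
  also have "\<dots> = 1 / l^2" using assms by (simp add: powr_minus powr_numeral divide_inverse)
  finally show ?thesis .
qed

lemma Nr_powr_mono: "a \<le> b \<Longrightarrow> Nr j powr a \<le> Nr j powr b"
  using Nr_ge1 by (intro powr_mono) auto

lemma Nr_powr_ge1: "a \<ge> 0 \<Longrightarrow> Nr j powr a \<ge> 1"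
  using Nr_ge1 by (intro ge_one_powr_ge_zero) auto

lemma wd_le: "real (wd j) \<le> 2 * Nr j powr (1/2 - eta)"
proof -
  have c0: "\<lceil>Nr j powr (1/2 - eta)\<rceil> \<ge> 0"
  proof -
    have h: "0 \<le> Nr j powr (1/2 - eta)" by simp
    show ?thesis using h by (metis ceiling_mono ceiling_zero)
  qed
  have "real (wd j) = of_int \<lceil>Nr j powr (1/2 - eta)\<rceil>" unfolding wd_def using c0 by simp
  also have "\<dots> \<le> Nr j powr (1/2 - eta) + 1" by (rule of_int_ceiling_le_add_one)
  also have "\<dots> \<le> 2 * Nr j powr (1/2 - eta)" using Nr_powr_ge1[of "1/2 - eta" j] eta_small by simp
  finally show ?thesis .
qed

lemma wd_ge1: "wd j \<ge> 1"
proof -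
  have "1 \<le> Nr j powr (1/2 - eta)" using Nr_powr_ge1[of "1/2 - eta" j] eta_small by simp
  then have "1 \<le> real (wd j)" using wd_ge[of j] by linarith
  then show ?thesis by simp
qed

lemma BAm_sets[measurable]: "BAm j m \<in> sets M" unfolding BAm_def by measurable
lemma BBm_sets[measurable]: "BBm j m \<in> sets M" unfolding BBm_def by measurable

lemma prob_BAm:
  assumes m: "m \<in> {1..2^j}"
  shows "prob (BAm j m) \<le> C / (real (2^j + 1 - m))^2"
proof -
  define l where "l = 2^j + 1 - m"
  have l1: "l \<ge> 1" and ml: "m + l = 2^j + 1" using m by (auto simp: l_def)
  have "BAm j m = {\<omega> \<in> space M. r m k \<omega> \<ge> t (m + l) \<omega> - t m \<omega>}"
    unfolding BAm_def ml by auto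
  then have "prob (BAm j m) \<le> C * real l powr (- \<gamma>)"
    using mu_bound[of m l] m l1 by auto
  also have "\<dots> \<le> C * (1 / (real l)^2)"
    using C_pos l1 by (intro mult_left_mono powr_le_inv_sq) auto
  finally show ?thesis by (simp add: l_def)
qed

lemma prob_BadA: "prob (BadA j) \<le> 2 * C * Nr j powr (- 3 * eta)"
proof -
  have c: "Nr j powr (3 * eta) > 0" using Nr_pos[of j] by simp
  have "prob (BadA j) \<le> (\<Sum>m\<in>{1..2^j}. prob (BAm j m)) / Nr j powr (3 * eta)"
    unfolding BadA_def by (rule markov_sum_ind[OF _ _ c]) auto
  also have "(\<Sum>m\<in>{1..2^j}. prob (BAm j m)) \<le> (\<Sum>m\<in>{1..2^j}. C / (real (2^j + 1 - m))^2)"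
    by (intro sum_mono prob_BAm)
  also have "(\<Sum>m\<in>{1..2^j}. C / (real (2^j + 1 - m))^2) = C * (\<Sum>l\<in>{1..(2::nat)^j}. 1 / (real l)^2)"
  proof -
    have "(\<Sum>m\<in>{1..(2::nat)^j}. C / (real (2^j + 1 - m))^2) = (\<Sum>l\<in>{1..(2::nat)^j}. C / (real l)^2)"
      by (subst sum.atLeastAtMost_rev) (auto intro!: sum.cong simp del: of_nat_diff)
    then show ?thesis by (simp add: sum_distrib_left)
  qed
  also have "\<dots> \<le> C * 2" using C_pos basel_le2 by (intro mult_left_mono) auto
  finally have "prob (BadA j) \<le> C * 2 / Nr j powr (3 * eta)" using c by (simp add: divide_right_mono)
  then show ?thesis by (simp add: powr_minus divide_inverse mult.commute mult.left_commute)
qed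

lemma Nr_mul: "Nr j powr a * Nr j powr b = Nr j powr (a + b)"
  by (simp add: powr_add)
lemma Nr_self: "Nr j = Nr j powr 1"
  using Nr_pos[of j] by simp
lemma Nr_times: "Nr j * Nr j powr a = Nr j powr (1 + a)"
proof -
  have e: "Nr j powr 1 = Nr j" using Nr_pos[of j] by simp
  have "Nr j powr 1 * Nr j powr a = Nr j powr (1 + a)" by (rule Nr_mul)
  then show ?thesis by (simp only: e)
qed
lemma Nr_div: "Nr j powr a / Nr j powr b = Nr j powr (a - b)"
  by (simp add: powr_diff)

lemma prob_BBm:
  assumes m: "m \<ge> 1"
  shows "prob (BBm j m) \<le> C * Nr j powr (2 * eta - 1)"
proof -
  have "BBm j m = {\<omega> \<in> space M. r m k \<omega> \<ge> t (m + wd j) \<omega> - t m \<omega>}"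
    unfolding BBm_def by auto
  then have "prob (BBm j m) \<le> C * real (wd j) powr (- \<gamma>)"
    using mu_bound[of m "wd j"] m wd_ge1 by auto
  also have "\<dots> \<le> C * (1 / (real (wd j))^2)"
    using C_pos wd_ge1[of j] by (intro mult_left_mono powr_le_inv_sq) auto
  also have "1 / (real (wd j))^2 \<le> 1 / (Nr j powr (1/2 - eta))^2"
    using wd_ge[of j] Nr_pos[of j] wd_ge1[of j] by (intro divide_left_mono power_mono) auto
  also have "(Nr j powr (1/2 - eta))^2 = Nr j powr (1 - 2 * eta)"
    by (simp add: power2_eq_square Nr_mul)
  also have "1 / Nr j powr (1 - 2 * eta) = Nr j powr (2 * eta - 1)"
    by (simp add: powr_minus_divide[symmetric])
  finally show ?thesis using C_pos by simp
qed

lemma prob_BadB: "prob (BadB j) \<le> C * Nr j powr (- eta)"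
proof -
  have c: "Nr j powr (3 * eta) > 0" using Nr_pos[of j] by simp
  have "prob (BadB j) \<le> (\<Sum>m\<in>{2^j<..<2*2^j}. prob (BBm j m)) / Nr j powr (3 * eta)"
    unfolding BadB_def by (rule markov_sum_ind[OF _ _ c]) auto
  also have "(\<Sum>m\<in>{2^j<..<2*2^j}. prob (BBm j m)) \<le> (\<Sum>m\<in>{(2::nat)^j<..<2*2^j}. C * Nr j powr (2 * eta - 1))"
    by (intro sum_mono prob_BBm) auto
  also have "\<dots> = real (2^j - 1) * (C * Nr j powr (2 * eta - 1))" by simp
  also have "\<dots> \<le> Nr j * (C * Nr j powr (2 * eta - 1))"
    using C_pos by (intro mult_right_mono) (auto simp: Nr_def)
  also have "\<dots> = C * (Nr j * Nr j powr (2 * eta - 1))" by simp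
  also have "Nr j * Nr j powr (2 * eta - 1) = Nr j powr (2 * eta)"
    using Nr_times[of j "2 * eta - 1"] by simp
  finally have "prob (BadB j) \<le> C * Nr j powr (2 * eta) / Nr j powr (3 * eta)"
    using c by (simp add: divide_right_mono)
  also have "\<dots> = C * (Nr j powr (2 * eta) / Nr j powr (3 * eta))" by simp
  also have "\<dots> = C * Nr j powr (- eta)"
    using Nr_div[of j "2 * eta" "3 * eta"] by simp
  finally show ?thesis .
qed

end

context delay_setup
begin

lemma int_q: "integrable M (\<lambda>\<omega>. \<bar>xi 1 k \<omega>\<bar> powr qq)"
  using xi_moment by (simp add: qq_def)

lemma Mq_nonneg: "Mq \<ge> 0"
  unfolding Mq_def by (intro integral_nonneg_AE) auto

lemma tail_bound:
  assumes b: "b > 0" and m: "m \<ge> 1"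
  shows "prob {\<omega>\<in>space M. b < \<bar>xi m k \<omega>\<bar>} \<le> Mq / b powr qq"
proof -
  have Bs: "{y::real. b < \<bar>y\<bar>} \<in> sets borel" by measurable
  have "prob {\<omega>\<in>space M. b < \<bar>xi m k \<omega>\<bar>} = measure (distr M borel (xi m k)) {y. b < \<bar>y\<bar>}"
    using Bs by (subst measure_distr) (auto intro!: arg_cong[where f=prob])
  also have "\<dots> = measure (distr M borel (xi 1 k)) {y. b < \<bar>y\<bar>}" using xi_ident[OF m] by simp
  also have "\<dots> = prob {\<omega>\<in>space M. b < \<bar>xi 1 k \<omega>\<bar>}"
    using Bs by (subst measure_distr) (auto intro!: arg_cong[where f=prob])
  also have "\<dots> \<le> prob {\<omega>\<in>space M. b powr qq \<le> \<bar>xi 1 k \<omega>\<bar> powr qq}"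
  proof (rule finite_measure_mono)
    show "{\<omega> \<in> space M. b < \<bar>xi 1 k \<omega>\<bar>} \<subseteq> {\<omega> \<in> space M. b powr qq \<le> \<bar>xi 1 k \<omega>\<bar> powr qq}"
      using b qq_gt2 by (auto intro!: powr_mono2)
    show "{\<omega> \<in> space M. b powr qq \<le> \<bar>xi 1 k \<omega>\<bar> powr qq} \<in> events" by measurable
  qed
  also have "\<dots> \<le> Mq / b powr qq"
    unfolding Mq_def using b
    by (intro integral_Markov_inequality_measure[OF int_q, where A="space M"]) auto
  finally show ?thesis .
qed

lemma bX_pos: "bX j > 0" unfolding bX_def using Nr_pos[of j] by simp

lemma BadX_sets[measurable]: "BadX j \<in> sets M"
  unfolding BadX_def by measurable

lemma prob_BadX: "prob (BadX j) \<le> 2 * Mq * Nr j powr (- qq * eta)"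
proof -
  have "prob (BadX j) \<le> (\<Sum>m\<in>{1..2*2^j}. prob {\<omega>\<in>space M. bX j < \<bar>xi m k \<omega>\<bar>})"
    unfolding BadX_def by (rule finite_measure_subadditive_finite) auto
  also have "\<dots> \<le> (\<Sum>m\<in>{1..(2::nat)*2^j}. Mq / bX j powr qq)"
    using bX_pos by (intro sum_mono tail_bound) auto
  also have "\<dots> = 2 * Nr j * Mq / bX j powr qq" by (simp add: Nr_def)
  also have "bX j powr qq = Nr j powr (1 + qq * eta)"
  proof -
    have "(1/qq + eta) * qq = 1 + qq * eta" using qq_gt2 by (simp add: field_simps)
    then show ?thesis unfolding bX_def powr_powr by simp
  qed
  also have "2 * Nr j * Mq / Nr j powr (1 + qq * eta) = 2 * Mq * (Nr j / Nr j powr (1 + qq * eta))"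
    by simp
  also have "Nr j / Nr j powr (1 + qq * eta) = Nr j powr (- qq * eta)"
    using Nr_div[of j 1 "1 + qq * eta"] Nr_pos[of j] by simp
  finally show ?thesis .
qed

lemma lam_pos: "lam j > 0" unfolding lam_def using Nr_pos[of j] by simp

lemma min_int: "integrable M (\<lambda>\<omega>. min \<bar>xi 1 k \<omega>\<bar> (lam j))"
  by (rule integrable_const_bound[where B="lam j"]) (use lam_pos[of j] in auto)

lemma mu_nonneg: "mu j \<ge> 0"
  unfolding mu_def by (intro integral_nonneg_AE) (use lam_pos[of j] in auto)

lemma mu_le: "mu j \<le> 1 + Mq"
proof -
  have "mu j \<le> (\<integral>\<omega>. 1 + \<bar>xi 1 k \<omega>\<bar> powr qq \<partial>M)"
    unfolding mu_def
  proof (rule integral_mono[OF min_int])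
    show "integrable M (\<lambda>\<omega>. 1 + \<bar>xi 1 k \<omega>\<bar> powr qq)" using int_q by auto
    fix \<omega> assume "\<omega> \<in> space M"
    show "min \<bar>xi 1 k \<omega>\<bar> (lam j) \<le> 1 + \<bar>xi 1 k \<omega>\<bar> powr qq"
    proof (cases "\<bar>xi 1 k \<omega>\<bar> \<le> 1")
      case True then show ?thesis by (smt (verit) powr_ge_zero)
    next
      case False
      then have "\<bar>xi 1 k \<omega>\<bar> powr 1 \<le> \<bar>xi 1 k \<omega>\<bar> powr qq" using qq_gt2 by (intro powr_mono) auto
      then show ?thesis using False by (smt (verit) powr_one_gt_zero_iff)
    qed
  qed
  also have "\<dots> = 1 + Mq" using int_q by (simp add: Mq_def prob_space)
  finally show ?thesis .
qed

end

context delay_setup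
begin

lemma Wn_sub: "Wn j n \<subseteq> {1..n}" unfolding Wn_def by auto
lemma Wn_fin: "finite (Wn j n)" using Wn_sub finite_subset by blast
lemma Wn_sub1: "Wn j n \<subseteq> {1..}" unfolding Wn_def by auto
lemma Wn_mem: "n \<ge> 1 \<Longrightarrow> n \<in> Wn j n" unfolding Wn_def using wd_ge1[of j] by auto
lemma card_Wn: "card (Wn j n) \<le> wd j"
proof -
  have "Wn j n \<subseteq> {n + 1 - wd j..n}" unfolding Wn_def by auto
  then have "card (Wn j n) \<le> card {n + 1 - wd j..n}" by (intro card_mono) auto
  also have "\<dots> \<le> wd j" by simp
  finally show ?thesis .
qed
lemma card_Wn_real: "real (card (Wn j n)) \<le> 2 * Nr j powr (1/2 - eta)"
  using card_Wn[of j n] wd_le[of j] by (meson of_nat_le_iff order.trans)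

lemma Jc_ge1: "Jc \<ge> 1"
proof -
  have "2 / eta > 0" using eta_pos by simp
  then show ?thesis unfolding Jc_def by linarith
qed
lemma Jc_eta: "eta * real Jc \<ge> 2"
proof -
  have "real Jc \<ge> 2 / eta" unfolding Jc_def by linarith
  then show ?thesis using eta_pos by (simp add: field_simps)
qed

lemma Nr_powr_pow: "(Nr j powr a) ^ n = Nr j powr (a * real n)"
proof -
  have "(Nr j powr a) ^ n = (Nr j powr a) powr (real n)"
    using Nr_pos[of j] by (simp add: powr_realpow)
  then show ?thesis by (simp add: powr_powr)
qed

lemma lam_pow: "lam j powr qq = Nr j powr (qq / 4)"
  unfolding lam_def powr_powr by simp

lemma BadE_part_sets:
  "(\<Union>S\<in>{S. S \<subseteq> Wn j n \<and> card S = Jc}. \<Inter>m\<in>S. xi m k -` {y. lam j < \<bar>y\<bar>} \<inter> space M) \<in> sets M"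
proof -
  have "{S. S \<subseteq> Wn j n \<and> card S = Jc} \<subseteq> Pow (Wn j n)" by auto
  then have fin: "finite {S. S \<subseteq> Wn j n \<and> card S = Jc}" using Wn_fin by (meson finite_Pow_iff finite_subset)
  show ?thesis
  proof (rule sets.finite_UN[OF fin])
    fix S assume S: "S \<in> {S. S \<subseteq> Wn j n \<and> card S = Jc}"
    then have "S \<noteq> {}" "finite S" using Jc_ge1 Wn_fin finite_subset by auto
    then show "(\<Inter>m\<in>S. xi m k -` {y. lam j < \<bar>y\<bar>} \<inter> space M) \<in> sets M"
      by (intro sets.finite_INT) (auto intro!: measurable_sets[OF xi_rv])
  qed
qed

lemma BadE_sets[measurable]: "BadE j \<in> sets M"
  unfolding BadE_def by (intro sets.finite_UN finite_atLeastLessThan BadE_part_sets)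

lemma prob_BadE: "prob (BadE j) \<le> (2 * Mq) ^ Jc * Nr j powr (- 1)"
proof -
  define p where "p = Mq / lam j powr qq"
  have p0: "p \<ge> 0" unfolding p_def using Mq_nonneg by simp
  have part: "prob (\<Union>S\<in>{S. S \<subseteq> Wn j n \<and> card S = Jc}. \<Inter>m\<in>S. xi m k -` {y. lam j < \<bar>y\<bar>} \<inter> space M)
      \<le> (2 * Mq) ^ Jc * Nr j powr (- 2)" for n
  proof -
    have "prob (\<Union>S\<in>{S. S \<subseteq> Wn j n \<and> card S = Jc}. \<Inter>m\<in>S. xi m k -` {y. lam j < \<bar>y\<bar>} \<inter> space M)
        \<le> (real (card (Wn j n)) * p) ^ Jc"
    proof (rule exceed_bound[OF xi_indep Wn_sub1 Wn_fin Jc_ge1 _ _ p0])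
      show "{y::real. lam j < \<bar>y\<bar>} \<in> sets borel" by measurable
      fix m assume "m \<in> Wn j n"
      then have m1: "m \<ge> 1" using Wn_sub1 by auto
      have "xi m k -` {y. lam j < \<bar>y\<bar>} \<inter> space M = {\<omega>\<in>space M. lam j < \<bar>xi m k \<omega>\<bar>}" by auto
      then show "prob (xi m k -` {y. lam j < \<bar>y\<bar>} \<inter> space M) \<le> p"
        unfolding p_def using tail_bound[OF lam_pos m1] by simp
    qed
    also have "\<dots> \<le> (2 * Mq * Nr j powr (- eta)) ^ Jc"
    proof (intro power_mono)
      show "0 \<le> real (card (Wn j n)) * p" using p0 by simp
      have "real (card (Wn j n)) * p \<le> 2 * Nr j powr (1/2 - eta) * p"
        using card_Wn_real p0 by (intro mult_right_mono) auto
      also have "2 * Nr j powr (1/2 - eta) * p = 2 * Mq * (Nr j powr (1/2 - eta) / Nr j powr (qq / 4))"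
        unfolding p_def lam_pow by (simp add: ac_simps)
      also have "\<dots> = 2 * Mq * Nr j powr (1/2 - eta - qq/4)"
        by (simp only: Nr_div)
      also have "\<dots> \<le> 2 * Mq * Nr j powr (- eta)"
        using Mq_nonneg qq_gt2 by (intro mult_left_mono Nr_powr_mono) auto
      finally show "real (card (Wn j n)) * p \<le> 2 * Mq * Nr j powr (- eta)" .
    qed
    also have "\<dots> = (2 * Mq) ^ Jc * Nr j powr (- eta * real Jc)"
      by (simp add: power_mult_distrib Nr_powr_pow)
    also have "\<dots> \<le> (2 * Mq) ^ Jc * Nr j powr (- 2)"
      using Jc_eta Mq_nonneg by (intro mult_left_mono Nr_powr_mono) auto
    finally show ?thesis .
  qed
  have "prob (BadE j) \<le> (\<Sum>n\<in>{2^j..<2*2^j}. prob (\<Union>S\<in>{S. S \<subseteq> Wn j n \<and> card S = Jc}. \<Inter>m\<in>S. xi m k -` {y. lam j < \<bar>y\<bar>} \<inter> space M))"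
    unfolding BadE_def by (rule finite_measure_subadditive_finite) (simp, use BadE_part_sets in blast)
  also have "\<dots> \<le> (\<Sum>n\<in>{(2::nat)^j..<2*2^j}. (2 * Mq) ^ Jc * Nr j powr (- 2))"
    by (intro sum_mono part)
  also have "\<dots> = real (card {(2::nat)^j..<2*2^j}) * ((2 * Mq) ^ Jc * Nr j powr (- 2))"
    by (rule sum_constant)
  also have "real (card {(2::nat)^j..<2*2^j}) = Nr j" by (simp add: Nr_def)
  also have "Nr j * ((2 * Mq) ^ Jc * Nr j powr (- 2)) = (2 * Mq) ^ Jc * (Nr j * Nr j powr (- 2))" by simp
  also have "Nr j * Nr j powr (- 2) = Nr j powr (- 1)" using Nr_times[of j "-2"] by simp
  finally show ?thesis .
qed

lemma xx_pos: "xx j > 0" unfolding xx_def using Nr_pos[of j] by simp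

lemma BadH_part_sets: "{\<omega>\<in>space M. c \<le> (\<Sum>m\<in>W. min \<bar>xi m k \<omega>\<bar> l)} \<in> sets M"
  by measurable

lemma BadH_sets[measurable]: "BadH j \<in> sets M"
  unfolding BadH_def by (intro sets.finite_UN finite_atLeastLessThan BadH_part_sets)

lemma prob_BadH: "prob (BadH j) \<le> Nr j * exp (- (Nr j powr (eta / 2)))"
proof -
  have part: "prob {\<omega>\<in>space M. real (card (Wn j n)) * mu j + xx j \<le> (\<Sum>m\<in>Wn j n. min \<bar>xi m k \<omega>\<bar> (lam j))}
      \<le> exp (- (Nr j powr (eta / 2)))" if n: "n \<in> {2^j..<2*2^j}" for n
  proof -
    have n1: "n \<ge> 1" using n by (auto simp: Suc_le_eq)
    have ne: "Wn j n \<noteq> {}" using Wn_mem[OF n1] by auto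
    have cpos: "real (card (Wn j n)) > 0" using ne Wn_fin by (simp add: card_gt_0_iff)
    have dst: "\<And>m. m \<in> Wn j n \<Longrightarrow> distr M borel (xi m k) = distr M borel (xi 1 k)"
    proof -
      fix m assume "m \<in> Wn j n"
      then have "m \<ge> 1" using Wn_sub1 by auto
      then show "distr M borel (xi m k) = distr M borel (xi 1 k)" by (rule xi_ident)
    qed
    have "prob {\<omega>\<in>space M. real (card (Wn j n)) * mu j + xx j \<le> (\<Sum>m\<in>Wn j n. min \<bar>xi m k \<omega>\<bar> (lam j))}
       \<le> exp (-2 * (xx j)\<^sup>2 / (real (card (Wn j n)) * (lam j)\<^sup>2))"
      unfolding mu_def
      by (rule hoeff_window[OF xi_indep Wn_sub1 Wn_fin ne dst xi_rv lam_pos less_imp_le[OF xx_pos]])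
    also have "\<dots> \<le> exp (- (Nr j powr (eta / 2)))"
    proof -
      have l2: "(lam j)\<^sup>2 = Nr j powr (1/2)" unfolding lam_def by (simp add: power2_eq_square Nr_mul)
      have x2: "(xx j)\<^sup>2 = Nr j powr (1 - eta/2)" unfolding xx_def by (simp add: power2_eq_square Nr_mul)
      have den: "real (card (Wn j n)) * (lam j)\<^sup>2 \<le> 2 * Nr j powr (1 - eta)"
      proof -
        have "real (card (Wn j n)) * (lam j)\<^sup>2 \<le> 2 * Nr j powr (1/2 - eta) * Nr j powr (1/2)"
          unfolding l2 using card_Wn_real by (intro mult_right_mono) auto
        also have "\<dots> = 2 * Nr j powr (1 - eta)" by (simp add: Nr_mul mult.assoc)
        finally show ?thesis .
      qed
      have dpos: "real (card (Wn j n)) * (lam j)\<^sup>2 > 0" using cpos lam_pos[of j] by simp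
      have "Nr j powr (eta / 2) = 2 * Nr j powr (1 - eta/2) / (2 * Nr j powr (1 - eta))"
        using Nr_div[of j "1 - eta/2" "1 - eta"] by simp
      also have "\<dots> \<le> 2 * (xx j)\<^sup>2 / (real (card (Wn j n)) * (lam j)\<^sup>2)"
        unfolding x2 using den dpos lam_pos[of j] Nr_pos[of j] cpos by (intro divide_left_mono) (auto simp: zero_less_mult_iff)
      finally show ?thesis by simp
    qed
    finally show ?thesis .
  qed
  have "prob (BadH j) \<le> (\<Sum>n\<in>{2^j..<2*2^j}. prob {\<omega>\<in>space M. real (card (Wn j n)) * mu j + xx j \<le> (\<Sum>m\<in>Wn j n. min \<bar>xi m k \<omega>\<bar> (lam j))})"
    unfolding BadH_def by (rule finite_measure_subadditive_finite) (simp, use BadH_part_sets in blast)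
  also have "\<dots> \<le> (\<Sum>n\<in>{(2::nat)^j..<2*2^j}. exp (- (Nr j powr (eta / 2))))"
    by (intro sum_mono part)
  also have "\<dots> = real (card {(2::nat)^j..<2*2^j}) * exp (- (Nr j powr (eta / 2)))"
    by (rule sum_constant)
  also have "real (card {(2::nat)^j..<2*2^j}) = Nr j" by (simp add: Nr_def)
  finally show ?thesis .
qed

end

lemma sum_if_card:
  assumes "finite A"
  shows "(\<Sum>x\<in>A. if P x then (1::real) else 0) = real (card {x\<in>A. P x})"
proof -
  have "(\<Sum>x\<in>A. if P x then (1::real) else 0) = sum (\<lambda>_. 1::real) {x\<in>A. P x}"
    by (rule sum.inter_filter[symmetric]) fact
  then show ?thesis by (metis real_of_card)
qed

context delay_setup
begin

definition "KS = 3 + 2 * (1 + Mq) + real Jc"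

lemma t_mono: "\<omega> \<in> space M \<Longrightarrow> 1 \<le> a \<Longrightarrow> a \<le> b \<Longrightarrow> t a \<omega> \<le> t b \<omega>"
  by (rule t_mono_gen[where t="\<lambda>m. t m \<omega>"]) (auto intro: t_incr)

lemma det_bound:
  assumes \<omega>: "\<omega> \<in> space M" and nA: "\<omega> \<notin> BadA j" and nB: "\<omega> \<notin> BadB j" and nX: "\<omega> \<notin> BadX j"
    and nH: "\<omega> \<notin> BadH j" and nE: "\<omega> \<notin> BadE j" and n: "2^j \<le> n" "n < 2*2^j"
  shows "\<bar>S_tot X xi n k \<omega> - S_obs X xi t r n k \<omega>\<bar> \<le> KS * Nr j powr (1/2 - eta/4)"
    and "\<bar>N_tot X n k \<omega> - N_obs X t r n k \<omega>\<bar> \<le> 4 * Nr j powr (1/2 - eta/4)"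
proof -
  define a where "a = 1/2 - eta/4"
  define U where "U = {m\<in>{1..n}. \<not> (t m \<omega> + r m k \<omega> < t (Suc n) \<omega>)}"
  define UA where "UA = {m\<in>{1..2^j}. \<omega> \<in> BAm j m}"
  define UB where "UB = {m\<in>{2^j<..<2*2^j}. \<omega> \<in> BBm j m}"
  define W where "W = Wn j n"
  have finU: "finite U" and finUA: "finite UA" and finUB: "finite UB" and finW: "finite W"
    by (auto simp: U_def UA_def UB_def W_def Wn_fin)
  have Sdiff: "S_tot X xi n k \<omega> - S_obs X xi t r n k \<omega> = (\<Sum>m\<in>U. X m k \<omega> * xi m k \<omega>)"
  proof -
    have "S_tot X xi n k \<omega> - S_obs X xi t r n k \<omega> =
        (\<Sum>m\<in>{1..n}. if \<not> (t m \<omega> + r m k \<omega> < t (Suc n) \<omega>) then X m k \<omega> * xi m k \<omega> else 0)"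
      unfolding S_tot_def S_obs_def by (auto simp: sum_subtractf[symmetric] intro!: sum.cong)
    also have "\<dots> = (\<Sum>m\<in>U. X m k \<omega> * xi m k \<omega>)"
      unfolding U_def by (rule sum.inter_filter[symmetric]) simp
    finally show ?thesis .
  qed
  have Ndiff: "N_tot X n k \<omega> - N_obs X t r n k \<omega> = (\<Sum>m\<in>U. X m k \<omega>)"
  proof -
    have "N_tot X n k \<omega> - N_obs X t r n k \<omega> =
        (\<Sum>m\<in>{1..n}. if \<not> (t m \<omega> + r m k \<omega> < t (Suc n) \<omega>) then X m k \<omega> else 0)"
      unfolding N_tot_def N_obs_def by (auto simp: sum_subtractf[symmetric] intro!: sum.cong)
    also have "\<dots> = (\<Sum>m\<in>U. X m k \<omega>)"
      unfolding U_def by (rule sum.inter_filter[symmetric]) simp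
    finally show ?thesis .
  qed
  have Usub: "U \<subseteq> UA \<union> UB \<union> W"
  proof
    fix m assume m: "m \<in> U"
    then have m1: "1 \<le> m" and mn: "m \<le> n" and c: "t (Suc n) \<omega> \<le> t m \<omega> + r m k \<omega>"
      unfolding U_def by auto
    show "m \<in> UA \<union> UB \<union> W"
    proof (cases "m \<le> 2^j")
      case True
      have "t (2^j + 1) \<omega> \<le> t (Suc n) \<omega>" using n by (intro t_mono[OF \<omega>]) auto
      then have "m \<in> UA" using c m1 True \<omega> unfolding UA_def BAm_def by auto
      then show ?thesis by simp
    next
      case False
      show ?thesis
      proof (cases "n < m + wd j")
        case True then have "m \<in> W" using m1 mn unfolding W_def Wn_def by auto
        then show ?thesis by simp
      next
        case False2: False
        have "t (m + wd j) \<omega> \<le> t (Suc n) \<omega>" using False2 m1 by (intro t_mono[OF \<omega>]) auto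
        then have "m \<in> UB" using c m1 False mn n \<omega> unfolding UB_def BBm_def by auto
        then show ?thesis by simp
      qed
    qed
  qed
  have gen: "sum f U \<le> sum f UA + sum f UB + sum f W" if f0: "\<And>m. f m \<ge> 0" for f :: "nat \<Rightarrow> real"
  proof -
    have "sum f U \<le> sum f (UA \<union> UB \<union> W)"
      using finUA finUB finW Usub f0 by (intro sum_mono2) auto
    also have "\<dots> \<le> sum f (UA \<union> UB) + sum f W"
      using finUA finUB finW f0 by (intro sum_Un_le_nonneg) auto
    also have "sum f (UA \<union> UB) \<le> sum f UA + sum f UB"
      using finUA finUB f0 by (intro sum_Un_le_nonneg) auto
    finally show ?thesis by simp
  qed
  have cardA: "real (card UA) < Nr j powr (3 * eta)"
  proof -
    have "(\<Sum>m\<in>{1..2^j}. indicator (BAm j m) \<omega>) = (\<Sum>m\<in>{1..(2::nat)^j}. if \<omega> \<in> BAm j m then (1::real) else 0)"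
      by (intro sum.cong) (auto simp: indicator_def)
    also have "\<dots> = real (card UA)" unfolding UA_def by (rule sum_if_card) simp
    finally show ?thesis using nA \<omega> unfolding BadA_def by auto
  qed
  have cardB: "real (card UB) < Nr j powr (3 * eta)"
  proof -
    have "(\<Sum>m\<in>{2^j<..<2*2^j}. indicator (BBm j m) \<omega>) = (\<Sum>m\<in>{(2::nat)^j<..<2*2^j}. if \<omega> \<in> BBm j m then (1::real) else 0)"
      by (intro sum.cong) (auto simp: indicator_def)
    also have "\<dots> = real (card UB)" unfolding UB_def by (rule sum_if_card) simp
    finally show ?thesis using nB \<omega> unfolding BadB_def by auto
  qed
  have cardW: "real (card W) \<le> 2 * Nr j powr (1/2 - eta)" unfolding W_def by (rule card_Wn_real)
  have xib: "\<bar>xi m k \<omega>\<bar> \<le> bX j" if "m \<in> {1..2*2^j}" for m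
  proof -
    have "\<not> bX j < \<bar>xi m k \<omega>\<bar>" using nX \<omega> that unfolding BadX_def by blast
    then show ?thesis by linarith
  qed
  have xibA: "\<bar>xi m k \<omega>\<bar> \<le> bX j" if "m \<in> UA" for m
    using that by (intro xib) (auto simp: UA_def)
  have xibB: "\<bar>xi m k \<omega>\<bar> \<le> bX j" if "m \<in> UB" for m
    using that by (intro xib) (auto simp: UB_def)
  have xibW: "\<bar>xi m k \<omega>\<bar> \<le> bX j" if "m \<in> W" for m
    using that n Wn_sub[of j n] by (intro xib) (auto simp: W_def)
  have n1: "n \<in> {2^j..<2*2^j}" using n by auto
  have Hb: "(\<Sum>m\<in>W. min \<bar>xi m k \<omega>\<bar> (lam j)) < real (card W) * mu j + xx j"
    using nH \<omega> n1 unfolding BadH_def W_def by force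
  define W' where "W' = {m\<in>W. lam j < \<bar>xi m k \<omega>\<bar>}"
  have cardW': "card W' < Jc"
  proof (rule ccontr)
    assume "\<not> card W' < Jc"
    then obtain S where S: "S \<subseteq> W'" "card S = Jc" by (meson not_less obtain_subset_with_card_n)
    then have "S \<subseteq> Wn j n" unfolding W'_def W_def by auto
    moreover have "\<omega> \<in> (\<Inter>m\<in>S. xi m k -` {y. lam j < \<bar>y\<bar>} \<inter> space M)"
      using S \<omega> unfolding W'_def by auto
    ultimately have "\<omega> \<in> BadE j" using n1 S unfolding BadE_def by blast
    then show False using nE by simp
  qed
  have Nr3: "Nr j powr (3 * eta) \<le> Nr j powr a" unfolding a_def using eta_small by (intro Nr_powr_mono) simp
  have Nrw: "Nr j powr (1/2 - eta) \<le> Nr j powr a" unfolding a_def using eta_pos by (intro Nr_powr_mono) simp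
  have bXa: "bX j \<le> Nr j powr a" unfolding a_def bX_def using eta_rel eta_pos by (intro Nr_powr_mono) linarith
  have Nr3bX: "Nr j powr (3 * eta) * bX j \<le> Nr j powr a"
  proof -
    have "Nr j powr (3 * eta) * bX j = Nr j powr (3 * eta + (1/qq + eta))" unfolding bX_def by (rule Nr_mul)
    also have "\<dots> \<le> Nr j powr a" unfolding a_def using eta_rel eta_pos by (intro Nr_powr_mono) linarith
    finally show ?thesis .
  qed
  have bX0: "bX j \<ge> 0" using bX_pos[of j] by simp
  have "\<bar>\<Sum>m\<in>U. X m k \<omega> * xi m k \<omega>\<bar> \<le> (\<Sum>m\<in>U. \<bar>xi m k \<omega>\<bar>)"
  proof -
    have "\<bar>\<Sum>m\<in>U. X m k \<omega> * xi m k \<omega>\<bar> \<le> (\<Sum>m\<in>U. \<bar>X m k \<omega> * xi m k \<omega>\<bar>)" by (rule sum_abs)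
    also have "\<dots> \<le> (\<Sum>m\<in>U. \<bar>xi m k \<omega>\<bar>)"
    proof (rule sum_mono)
      fix m assume "m \<in> U"
      then have "X m k \<omega> \<in> {0, 1}" using X_01 \<omega> unfolding U_def by auto
      then show "\<bar>X m k \<omega> * xi m k \<omega>\<bar> \<le> \<bar>xi m k \<omega>\<bar>" by (auto simp: abs_mult)
    qed
    finally show ?thesis .
  qed
  also have "\<dots> \<le> (\<Sum>m\<in>UA. \<bar>xi m k \<omega>\<bar>) + (\<Sum>m\<in>UB. \<bar>xi m k \<omega>\<bar>) + (\<Sum>m\<in>W. \<bar>xi m k \<omega>\<bar>)"
    by (rule gen) simp
  also have "(\<Sum>m\<in>UA. \<bar>xi m k \<omega>\<bar>) \<le> Nr j powr a"
  proof -
    have "(\<Sum>m\<in>UA. \<bar>xi m k \<omega>\<bar>) \<le> real (card UA) * bX j" by (rule sum_bounded_above) (rule xibA)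
    also have "\<dots> \<le> Nr j powr (3 * eta) * bX j" using cardA bX0 by (intro mult_right_mono) auto
    finally show ?thesis using Nr3bX by linarith
  qed
  also have "(\<Sum>m\<in>UB. \<bar>xi m k \<omega>\<bar>) \<le> Nr j powr a"
  proof -
    have "(\<Sum>m\<in>UB. \<bar>xi m k \<omega>\<bar>) \<le> real (card UB) * bX j" by (rule sum_bounded_above) (rule xibB)
    also have "\<dots> \<le> Nr j powr (3 * eta) * bX j" using cardB bX0 by (intro mult_right_mono) auto
    finally show ?thesis using Nr3bX by linarith
  qed
  also have "(\<Sum>m\<in>W. \<bar>xi m k \<omega>\<bar>) \<le> (2 * (1 + Mq) + 1 + real Jc) * Nr j powr a"
  proof -
    have "(\<Sum>m\<in>W. \<bar>xi m k \<omega>\<bar>) \<le> (\<Sum>m\<in>W. min \<bar>xi m k \<omega>\<bar> (lam j) + (if lam j < \<bar>xi m k \<omega>\<bar> then \<bar>xi m k \<omega>\<bar> else 0))"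
      using lam_pos[of j] by (intro sum_mono) auto
    also have "\<dots> = (\<Sum>m\<in>W. min \<bar>xi m k \<omega>\<bar> (lam j)) + (\<Sum>m\<in>W'. \<bar>xi m k \<omega>\<bar>)"
      unfolding W'_def by (simp add: sum.distrib sum.inter_filter[OF finW])
    also have "(\<Sum>m\<in>W'. \<bar>xi m k \<omega>\<bar>) \<le> real (card W') * bX j"
      by (rule sum_bounded_above) (use xibW in \<open>auto simp: W'_def\<close>)
    also have "real (card W') * bX j \<le> real Jc * Nr j powr a"
      using cardW' bX0 bXa by (intro mult_mono) auto
    also have "(\<Sum>m\<in>W. min \<bar>xi m k \<omega>\<bar> (lam j)) \<le> real (card W) * mu j + xx j" using Hb by simp
    also have "real (card W) * mu j \<le> (2 * Nr j powr (1/2 - eta)) * (1 + Mq)"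
      using cardW mu_le[of j] mu_nonneg[of j] by (intro mult_mono) auto
    also have "\<dots> \<le> (2 * Nr j powr a) * (1 + Mq)"
      using Nrw Mq_nonneg by (intro mult_right_mono) auto
    also have "xx j = Nr j powr a" unfolding xx_def a_def ..
    finally show ?thesis by (simp add: algebra_simps)
  qed
  finally show "\<bar>S_tot X xi n k \<omega> - S_obs X xi t r n k \<omega>\<bar> \<le> KS * Nr j powr (1/2 - eta/4)"
    unfolding Sdiff KS_def a_def[symmetric] by (simp add: algebra_simps)
  have "\<bar>\<Sum>m\<in>U. X m k \<omega>\<bar> \<le> (\<Sum>m\<in>U. (1::real))"
  proof -
    have "\<bar>\<Sum>m\<in>U. X m k \<omega>\<bar> \<le> (\<Sum>m\<in>U. \<bar>X m k \<omega>\<bar>)" by (rule sum_abs)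
    also have "\<dots> \<le> (\<Sum>m\<in>U. (1::real))"
    proof (rule sum_mono)
      fix m assume "m \<in> U"
      then have "X m k \<omega> \<in> {0, 1}" using X_01 \<omega> unfolding U_def by auto
      then show "\<bar>X m k \<omega>\<bar> \<le> 1" by auto
    qed
    finally show ?thesis .
  qed
  also have "\<dots> \<le> (\<Sum>m\<in>UA. (1::real)) + (\<Sum>m\<in>UB. 1) + (\<Sum>m\<in>W. 1)"
    by (rule gen) simp
  also have "\<dots> = real (card UA) + real (card UB) + real (card W)" by simp
  also have "\<dots> \<le> 4 * Nr j powr a" using cardA cardB cardW Nr3 Nrw by linarith
  finally show "\<bar>N_tot X n k \<omega> - N_obs X t r n k \<omega>\<bar> \<le> 4 * Nr j powr (1/2 - eta/4)"
    unfolding Ndiff a_def .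
qed

end

context delay_setup
begin

lemma Nr_eq: "Nr j = (2::real) ^ j" by (simp add: Nr_def)

lemma summ_bound:
  assumes "\<And>j. prob (E j) \<le> c * Nr j powr (- b)" "b > 0"
  shows "summable (\<lambda>j. prob (E j))"
proof (rule summable_comparison_test[OF _ summable_geom_powr[OF assms(2), of c]])
  show "\<exists>N. \<forall>n\<ge>N. norm (prob (E n)) \<le> c * ((2::real) ^ n) powr (- b)"
    using assms(1) by (auto simp: Nr_eq)
qed

lemma summ_A: "summable (\<lambda>j. prob (BadA j))"
  by (rule summ_bound[OF _ mult_pos_pos[OF _ eta_pos], of _ "2 * C" 3]) (use prob_BadA in auto)
lemma summ_B: "summable (\<lambda>j. prob (BadB j))"
  by (rule summ_bound[OF _ eta_pos, of _ C]) (use prob_BadB in auto)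
lemma summ_X: "summable (\<lambda>j. prob (BadX j))"
proof (rule summ_bound[of _ "2 * Mq" "qq * eta"])
  show "prob (BadX j) \<le> 2 * Mq * Nr j powr - (qq * eta)" for j using prob_BadX[of j] by simp
  show "0 < qq * eta" using qq_gt2 eta_pos by simp
qed
lemma summ_E: "summable (\<lambda>j. prob (BadE j))"
  by (rule summ_bound[of _ "(2 * Mq) ^ Jc" 1]) (use prob_BadE in auto)

lemma H_bound: "Nr j * exp (- (Nr j powr (eta / 2))) \<le> (real (2 * Jc)) ^ (2 * Jc) * Nr j powr (- 1)"
proof -
  define y where "y = Nr j powr (eta / 2)"
  have y0: "y > 0" unfolding y_def using Nr_pos[of j] by simp
  have kpos: "2 * Jc > 0" using Jc_ge1 by simp
  have "exp (- y) \<le> (real (2 * Jc) / y) ^ (2 * Jc)" by (rule exp_neg_le_fact[OF y0 kpos])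
  also have "\<dots> = real (2 * Jc) ^ (2 * Jc) / y ^ (2 * Jc)" by (simp add: power_divide)
  also have "y ^ (2 * Jc) = Nr j powr (eta * real Jc)"
    unfolding y_def Nr_powr_pow by simp
  finally have e: "exp (- y) \<le> real (2 * Jc) ^ (2 * Jc) / Nr j powr (eta * real Jc)" .
  have "Nr j powr 2 \<le> Nr j powr (eta * real Jc)" using Jc_eta by (intro Nr_powr_mono) simp
  then have "real (2 * Jc) ^ (2 * Jc) / Nr j powr (eta * real Jc) \<le> real (2 * Jc) ^ (2 * Jc) / Nr j powr 2"
    using Nr_pos[of j] by (intro divide_left_mono) auto
  with e have "Nr j * exp (- y) \<le> Nr j * (real (2 * Jc) ^ (2 * Jc) / Nr j powr 2)"
    using Nr_pos[of j] by (intro mult_left_mono) auto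
  also have "\<dots> = real (2 * Jc) ^ (2 * Jc) * (Nr j / Nr j powr 2)" by simp
  also have "Nr j / Nr j powr 2 = Nr j powr (- 1)"
    using Nr_div[of j 1 2] Nr_pos[of j] by simp
  finally show ?thesis unfolding y_def .
qed

lemma summ_H: "summable (\<lambda>j. prob (BadH j))"
  by (rule summ_bound[of _ "(real (2 * Jc)) ^ (2 * Jc)" 1]) (use prob_BadH H_bound order.trans in blast, simp)

lemma BadA_sets[measurable]: "BadA j \<in> sets M" unfolding BadA_def by measurable
lemma BadB_sets[measurable]: "BadB j \<in> sets M" unfolding BadB_def by measurable

lemma BC:
  assumes "\<And>j. E j \<in> sets M" "summable (\<lambda>j. prob (E j))"
  shows "AE \<omega> in M. eventually (\<lambda>j. \<omega> \<notin> E j) sequentially"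
proof -
  have "AE \<omega> in M. eventually (\<lambda>j. \<omega> \<in> space M - E j) sequentially"
    by (rule borel_cantelli_AE1) (use assms in \<open>auto simp: emeasure_eq_measure\<close>)
  then show ?thesis by (auto elim!: eventually_mono)
qed

lemma KS_nonneg: "KS \<ge> 0" unfolding KS_def using Mq_nonneg by simp

lemma main_k:
  "(AE \<omega> in M. (\<lambda>n. S_tot X xi n k \<omega> - S_obs X xi t r n k \<omega>) \<in> o(\<lambda>n. real n powr (1/2 - eta/8))) \<and>
   (AE \<omega> in M. (\<lambda>n. N_tot X n k \<omega> - N_obs X t r n k \<omega>) \<in> o(\<lambda>n. real n powr (1/2 - eta/8)))"
proof -
  have "AE \<omega> in M. \<omega> \<in> space M \<and> eventually (\<lambda>j. \<omega> \<notin> BadA j \<and> \<omega> \<notin> BadB j \<and> \<omega> \<notin> BadX j \<and> \<omega> \<notin> BadH j \<and> \<omega> \<notin> BadE j) sequentially"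
    using BC[OF BadA_sets summ_A] BC[OF BadB_sets summ_B] BC[OF BadX_sets summ_X]
      BC[OF BadH_sets summ_H] BC[OF BadE_sets summ_E] AE_space
    by eventually_elim (simp add: eventually_conj_iff)
  then have good: "AE \<omega> in M. eventually (\<lambda>n. \<bar>S_tot X xi n k \<omega> - S_obs X xi t r n k \<omega>\<bar> \<le> KS * real n powr (1/2 - eta/4)) sequentially
      \<and> eventually (\<lambda>n. \<bar>N_tot X n k \<omega> - N_obs X t r n k \<omega>\<bar> \<le> 4 * real n powr (1/2 - eta/4)) sequentially"
  proof (rule AE_mp, intro AE_I2 impI)
    fix \<omega> assume "\<omega> \<in> space M \<and> eventually (\<lambda>j. \<omega> \<notin> BadA j \<and> \<omega> \<notin> BadB j \<and> \<omega> \<notin> BadX j \<and> \<omega> \<notin> BadH j \<and> \<omega> \<notin> BadE j) sequentially"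
    then obtain j0 where \<omega>: "\<omega> \<in> space M" and
      g: "\<And>j. j \<ge> j0 \<Longrightarrow> \<omega> \<notin> BadA j \<and> \<omega> \<notin> BadB j \<and> \<omega> \<notin> BadX j \<and> \<omega> \<notin> BadH j \<and> \<omega> \<notin> BadE j"
      by (auto simp: eventually_sequentially)
    have key: "\<bar>S_tot X xi n k \<omega> - S_obs X xi t r n k \<omega>\<bar> \<le> KS * real n powr (1/2 - eta/4) \<and>
               \<bar>N_tot X n k \<omega> - N_obs X t r n k \<omega>\<bar> \<le> 4 * real n powr (1/2 - eta/4)"
      if n0: "n \<ge> 2 ^ j0" for n
    proof -
      have "n \<ge> 1" using n0 by (meson le_trans one_le_power one_le_numeral)
      then obtain j where j: "2 ^ j \<le> n" "n < 2 ^ (j + 1)"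
        using ex_power_ivl1[of 2 n] by auto
      have jj: "j \<ge> j0"
      proof (rule ccontr)
        assume "\<not> j0 \<le> j"
        then have "j + 1 \<le> j0" by simp
        then have "(2::nat) ^ (j + 1) \<le> 2 ^ j0" by (intro power_increasing) auto
        then show False using j n0 by simp
      qed
      have nj: "n < 2 * 2 ^ j" using j by simp
      have e: "Nr j powr (1/2 - eta/4) \<le> real n powr (1/2 - eta/4)"
        using j eta_small by (intro powr_mono2) (auto simp: Nr_def)
      have "\<bar>S_tot X xi n k \<omega> - S_obs X xi t r n k \<omega>\<bar> \<le> KS * Nr j powr (1/2 - eta/4)"
        using det_bound(1)[OF \<omega> _ _ _ _ _ j(1) nj] g[OF jj] by blast
      also have "\<dots> \<le> KS * real n powr (1/2 - eta/4)" using e KS_nonneg by (intro mult_left_mono)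
      finally have s: "\<bar>S_tot X xi n k \<omega> - S_obs X xi t r n k \<omega>\<bar> \<le> KS * real n powr (1/2 - eta/4)" .
      have "\<bar>N_tot X n k \<omega> - N_obs X t r n k \<omega>\<bar> \<le> 4 * Nr j powr (1/2 - eta/4)"
        using det_bound(2)[OF \<omega> _ _ _ _ _ j(1) nj] g[OF jj] by blast
      also have "\<dots> \<le> 4 * real n powr (1/2 - eta/4)" using e by simp
      finally show ?thesis using s by simp
    qed
    show "eventually (\<lambda>n. \<bar>S_tot X xi n k \<omega> - S_obs X xi t r n k \<omega>\<bar> \<le> KS * real n powr (1/2 - eta/4)) sequentially
      \<and> eventually (\<lambda>n. \<bar>N_tot X n k \<omega> - N_obs X t r n k \<omega>\<bar> \<le> 4 * real n powr (1/2 - eta/4)) sequentially"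
      using key unfolding eventually_sequentially by blast
  qed
  have lt: "1/2 - eta/4 < 1/2 - eta/8" using eta_pos by simp
  show ?thesis
  proof
    show "AE \<omega> in M. (\<lambda>n. S_tot X xi n k \<omega> - S_obs X xi t r n k \<omega>) \<in> o(\<lambda>n. real n powr (1/2 - eta/8))"
      using good by eventually_elim (auto intro: smallo_from_bound[OF _ lt])
    show "AE \<omega> in M. (\<lambda>n. N_tot X n k \<omega> - N_obs X t r n k \<omega>) \<in> o(\<lambda>n. real n powr (1/2 - eta/8))"
      using good by eventually_elim (auto intro: smallo_from_bound[OF _ lt])
  qed
qed

end

theorem mainTheorem3:
  fixes M :: "'a measure" and K :: nat
    and X :: "nat \<Rightarrow> nat \<Rightarrow> 'a \<Rightarrow> real"
    and xi :: "nat \<Rightarrow> nat \<Rightarrow> 'a \<Rightarrow> real"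
    and t :: "nat \<Rightarrow> 'a \<Rightarrow> real"
    and r :: "nat \<Rightarrow> nat \<Rightarrow> 'a \<Rightarrow> real"
    and \<delta> C \<gamma> :: real
  assumes P: "prob_space M"
    and K: "K \<ge> 1"
    and X_rv: "\<And>m k. X m k \<in> borel_measurable M"
    and X_01: "\<And>m k \<omega>. m \<ge> 1 \<Longrightarrow> k \<in> {1..K} \<Longrightarrow> \<omega> \<in> space M \<Longrightarrow> X m k \<omega> \<in> {0, 1}"
    and X_one: "\<And>m \<omega>. m \<ge> 1 \<Longrightarrow> \<omega> \<in> space M \<Longrightarrow> (\<exists>!k. k \<in> {1..K} \<and> X m k \<omega> = 1)"
    and xi_rv: "\<And>m k. xi m k \<in> borel_measurable M"
    and xi_indep: "\<And>k. k \<in> {1..K} \<Longrightarrow>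
          prob_space.indep_vars M (\<lambda>_. borel) (\<lambda>m. xi m k) {1..}"
    and xi_ident: "\<And>m k. m \<ge> 1 \<Longrightarrow> k \<in> {1..K} \<Longrightarrow>
          distr M borel (xi m k) = distr M borel (xi 1 k)"
    and \<delta>_pos: "\<delta> > 0"
    and xi_moment: "\<And>k. k \<in> {1..K} \<Longrightarrow>
          integrable M (\<lambda>\<omega>. \<bar>xi 1 k \<omega>\<bar> powr (2 + \<delta>))"
    and t_rv: "\<And>m. t m \<in> borel_measurable M"
    and t_incr: "\<And>m \<omega>. m \<ge> 1 \<Longrightarrow> \<omega> \<in> space M \<Longrightarrow> t m \<omega> \<le> t (Suc m) \<omega>"
    and t_indep: "prob_space.indep_vars M (\<lambda>_. borel) (\<lambda>m \<omega>. t (Suc m) \<omega> - t m \<omega>) {1..}"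
    and r_rv: "\<And>m k. r m k \<in> borel_measurable M"
    and r_indep: "\<And>k. k \<in> {1..K} \<Longrightarrow>
          prob_space.indep_vars M (\<lambda>_. borel) (\<lambda>m. r m k) {1..}"
    and indep_past: "\<And>n. n \<ge> 1 \<Longrightarrow>
          prob_space.indep_var M
            (PiM ({n..} \<times> {0..K}) (\<lambda>_. borel))
            (\<lambda>\<omega>. \<lambda>p\<in>{n..} \<times> {0..K}.
               if snd p = 0 then t (Suc (fst p)) \<omega> - t (fst p) \<omega> else r (fst p) (snd p) \<omega>)
            (PiM ({1..n} \<times> {1..K}) (\<lambda>_. borel))
            (\<lambda>\<omega>. \<lambda>p\<in>{1..n} \<times> {1..K}. X (fst p) (snd p) \<omega>)"
    and C_pos: "C > 0"
    and \<gamma>: "\<gamma> \<ge> 2"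
    and mu_bound: "\<And>m l k. m \<ge> 1 \<Longrightarrow> l \<ge> 1 \<Longrightarrow> k \<in> {1..K} \<Longrightarrow>
          measure M {\<omega> \<in> space M. r m k \<omega> \<ge> t (m + l) \<omega> - t m \<omega>} \<le> C * real l powr (- \<gamma>)"
  shows "\<exists>\<delta>0. 0 < \<delta>0 \<and> \<delta>0 < 1/2 - 1/(2 + \<delta>) \<and>
     (\<forall>k\<in>{1..K}.
        (AE \<omega> in M. (\<lambda>n. S_tot X xi n k \<omega> - S_obs X xi t r n k \<omega>)
                        \<in> o(\<lambda>n. real n powr (1/2 - \<delta>0))) \<and>
        (AE \<omega> in M. (\<lambda>n. N_tot X n k \<omega> - N_obs X t r n k \<omega>)
                        \<in> o(\<lambda>n. real n powr (1/2 - \<delta>0))))"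
proof -
  define \<eta> where "\<eta> = (1/2 - 1/(2 + \<delta>)) / 8"
  have \<eta>pos: "\<eta> > 0"
  proof -
    have "1 / (2 + \<delta>) < 1/2" using \<delta>_pos by (simp add: field_simps)
    then show ?thesis by (simp add: \<eta>_def)
  qed
  have each: "(AE \<omega> in M. (\<lambda>n. S_tot X xi n k \<omega> - S_obs X xi t r n k \<omega>) \<in> o(\<lambda>n. real n powr (1/2 - \<eta>/8))) \<and>
        (AE \<omega> in M. (\<lambda>n. N_tot X n k \<omega> - N_obs X t r n k \<omega>) \<in> o(\<lambda>n. real n powr (1/2 - \<eta>/8)))"
    if k: "k \<in> {1..K}" for k
  proof -
    interpret D: delay_setup M k X xi t r \<delta> C \<gamma>
      by (intro delay_setup.intro[OF P] delay_setup_axioms.intro; (intro X_01 xi_rv xi_indep xi_ident xi_moment t_rv t_incr r_rv mu_bound \<delta>_pos C_pos \<gamma>)?; (use k in simp)?)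
    show ?thesis using D.main_k unfolding D.eta_def D.qq_def \<eta>_def .
  qed
  show ?thesis
  proof (intro exI conjI ballI)
    show "0 < \<eta> / 8" using \<eta>pos by simp
    show "\<eta> / 8 < 1/2 - 1/(2 + \<delta>)" using \<eta>pos unfolding \<eta>_def by simp
  qed (use each in auto)
qed

end
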